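(* Suppose $\beta\ge\bar\beta$. Then for every $X\in\overline\Omega_{1/6}$, $$\|\nabla h(X)\|_F\ge\frac12\big\|\mathrm{grad} f(\mathcal{P}_{\mathcal{S}_{n,p}}(X))\big\|_F+\frac\beta4\|X^\top X-I_p\|_F .$$
   Context: $f:\mathbb{R}^{n\times p}\to\mathbb{R}$ ($n\ge p$) is differentiable with $f,\nabla f$ locally Lipschitz. $\Phi(M):=\frac12(M+M^\top)$. For $Y\in\mathcal{S}_{n,p}=\{Y:Y^\top Y=I_p\}$, $\mathrm{grad} f(Y):=\nabla f(Y)-Y\Phi(Y^\top\nabla f(Y))$. $\mathcal{A}(X):=\frac32I_p-\frac12X^\top X$, $g(X):=f(X\mathcal{A}(X))$, $h(X):=g(X)+\frac\beta4\|X^\top X-I_p\|_F^2$, $G(X):=\nabla f(Y)|_{Y=X\mathcal{A}(X)}$. $\overline\Omega_r:=\{X:\|X^\top X-I_p\|_F\le r\}$; $\Omega:=\{X:\|X\|_2\le1+\frac1{12}\}$; $M_1:=\sup_{X\in\Omega}\|G(X)\|_F$; $M_2:=\sup_{X\ne Y\in\Omega}\frac{\|\nabla g(X)-\nabla g(Y)\|_F}{\|X-Y\|_F}$; $\bar\beta:=\max\{12M_1,6M_2\}$. For full-column-rank $X$ with economic SVD $X=U\Sigma V^\top$, $\mathcal{P}_{\mathcal{S}_{n,p}}(X):=UV^\top$. *)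

theory Defs
  imports "HOL-Analysis.Analysis"
begin

text \<open>Matrices in R^{n x p} are represented as real^'p^'n (rows indexed by 'n, columns by 'p).
  The built-in norm / inner product on this type are the Frobenius norm / inner product.\<close>

definition egrad :: "(real^'p^'n \<Rightarrow> real) \<Rightarrow> real^'p^'n \<Rightarrow> real^'p^'n" where
  "egrad \<phi> X = (THE G. (\<phi> has_derivative (\<lambda>H. G \<bullet> H)) (at X))"

definition loc_lipschitz :: "('a::metric_space \<Rightarrow> 'b::metric_space) \<Rightarrow> bool" where
  "loc_lipschitz g \<longleftrightarrow> (\<forall>x. \<exists>e>0. \<exists>L. \<forall>y\<in>ball x e. \<forall>z\<in>ball x e. dist (g y) (g z) \<le> L * dist y z)"

definition symPart :: "real^'p^'p \<Rightarrow> real^'p^'p" where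
  "symPart M = (1/2) *\<^sub>R (M + transpose M)"

definition rgrad :: "(real^'p^'n \<Rightarrow> real) \<Rightarrow> real^'p^'n \<Rightarrow> real^'p^'n" where
  "rgrad f Y = egrad f Y - Y ** symPart (transpose Y ** egrad f Y)"

definition Amap :: "real^'p^'n \<Rightarrow> real^'p^'p" where
  "Amap X = (3/2) *\<^sub>R mat 1 - (1/2) *\<^sub>R (transpose X ** X)"

definition gfun :: "(real^'p^'n \<Rightarrow> real) \<Rightarrow> real^'p^'n \<Rightarrow> real" where
  "gfun f X = f (X ** Amap X)"

definition hfun :: "(real^'p^'n \<Rightarrow> real) \<Rightarrow> real \<Rightarrow> real^'p^'n \<Rightarrow> real" where
  "hfun f \<beta> X = gfun f X + \<beta>/4 * (norm (transpose X ** X - mat 1))\<^sup>2"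

definition Gfun :: "(real^'p^'n \<Rightarrow> real) \<Rightarrow> real^'p^'n \<Rightarrow> real^'p^'n" where
  "Gfun f X = egrad f (X ** Amap X)"

text \<open>Omega = {X. spectral norm of X \<le> 1 + 1/12}; the spectral norm is the operator norm.\<close>
definition OmegaSet :: "(real^'p^'n) set" where
  "OmegaSet = {X. onorm (\<lambda>v. X *v v) \<le> 1 + 1/12}"

definition OmegaBar :: "real \<Rightarrow> (real^'p^'n) set" where
  "OmegaBar r = {X. norm (transpose X ** X - mat 1) \<le> r}"

definition M1 :: "(real^'p^'n \<Rightarrow> real) \<Rightarrow> real" where
  "M1 f = (SUP X\<in>(OmegaSet::(real^'p^'n) set). norm (Gfun f X))"

definition M2 :: "(real^'p^'n \<Rightarrow> real) \<Rightarrow> real" where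
  "M2 f = Sup {norm (egrad (gfun f) X - egrad (gfun f) Y) / norm (X - Y) | X Y.
                 X \<in> (OmegaSet::(real^'p^'n) set) \<and> Y \<in> OmegaSet \<and> X \<noteq> Y}"

definition beta_bar :: "(real^'p^'n \<Rightarrow> real) \<Rightarrow> real" where
  "beta_bar f = max (12 * M1 f) (6 * M2 f)"

definition econ_svd :: "real^'p^'n \<Rightarrow> real^'p^'n \<Rightarrow> real^'p^'p \<Rightarrow> real^'p^'p \<Rightarrow> bool" where
  "econ_svd X U S V \<longleftrightarrow> transpose U ** U = mat 1 \<and> transpose V ** V = mat 1 \<and>
     (\<forall>i j. i \<noteq> j \<longrightarrow> S $ i $ j = 0) \<and> (\<forall>i. S $ i $ i \<ge> 0) \<and>
     X = U ** S ** transpose V"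

definition polar_proj :: "real^'p^'n \<Rightarrow> real^'p^'n" where
  "polar_proj X = (THE Q. \<exists>U S V. econ_svd X U S V \<and> Q = U ** transpose V)"

end

theory Submission
  imports Defs
begin

lemma inner_mat: "(A::real^'m^'n) \<bullet> B = (\<Sum>i\<in>UNIV. \<Sum>j\<in>UNIV. A$i$j * B$i$j)"
  by (simp add: inner_vec_def)

lemma mm_row: "((B::real^'m^'n) ** (C::real^'p^'m)) $ i = B$i v* C"
  by (simp add: vec_eq_iff matrix_matrix_mult_def vector_matrix_mult_def mult.commute)

lemma inner_transpose: "(A::real^'p^'n) \<bullet> transpose B = transpose A \<bullet> B"
proof -
  have "(\<Sum>i\<in>UNIV. \<Sum>j\<in>UNIV. A$i$j * B$j$i) = (\<Sum>j\<in>UNIV. \<Sum>i\<in>UNIV. A$i$j * B$j$i)"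
    by (rule sum.swap)
  thus ?thesis by (simp add: inner_mat transpose_def)
qed

lemma inner_mul_right: "(A::real^'p^'n) \<bullet> ((B::real^'m^'n) ** C) = (A ** transpose C) \<bullet> B"
proof -
  have "A \<bullet> (B ** C) = (\<Sum>i\<in>UNIV. A$i \<bullet> (B$i v* C))" by (simp add: inner_vec_def mm_row)
  also have "\<dots> = (\<Sum>i\<in>UNIV. (A ** transpose C)$i \<bullet> B$i)"
    by (rule sum.cong[OF refl]) (metis mm_row dot_lmul_matrix inner_commute vector_transpose_matrix)
  finally show ?thesis by (simp add: inner_vec_def)
qed

lemma inner_mul_left: "(A::real^'p^'n) \<bullet> ((B::real^'m^'n) ** C) = (transpose B ** A) \<bullet> C"
proof -
  have "A \<bullet> (B ** C) = transpose A \<bullet> (transpose C ** transpose B)"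
    using inner_transpose[of A "transpose (B ** C)"] by (simp add: transpose_transpose matrix_transpose_mul)
  also have "\<dots> = (transpose A ** B) \<bullet> transpose C" by (simp add: inner_mul_right transpose_transpose)
  also have "\<dots> = (transpose B ** A) \<bullet> C" by (simp add: inner_transpose matrix_transpose_mul transpose_transpose)
  finally show ?thesis .
qed
lemma norm_transpose: "norm (transpose (A::real^'p^'n)) = norm A"
proof -
  have "transpose A \<bullet> transpose A = A \<bullet> A" by (simp add: inner_transpose transpose_transpose)
  thus ?thesis by (simp add: norm_eq_sqrt_inner)
qed

lemma norm_sq_rows: "(norm (A::real^'m^'n))^2 = (\<Sum>i\<in>UNIV. (norm (A$i))^2)"
  by (simp add: power2_norm_eq_inner inner_vec_def)

lemma CS_sq: "((x::'a::real_inner) \<bullet> y)^2 \<le> (norm x)^2 * (norm y)^2"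
  by (simp add: power2_norm_eq_inner Cauchy_Schwarz_ineq)

lemma norm_mv_le: "norm ((A::real^'p^'n) *v x) \<le> norm A * norm x"
proof -
  have "(norm (A *v x))^2 = (\<Sum>i\<in>UNIV. (A$i \<bullet> x)^2)"
    unfolding power2_norm_eq_inner by (simp add: inner_vec_def matrix_vector_mult_def power2_eq_square)
  also have "\<dots> \<le> (\<Sum>i\<in>UNIV. (norm (A$i))^2 * (norm x)^2)"
    by (rule sum_mono) (rule CS_sq)
  also have "\<dots> = (norm A * norm x)^2"
    by (simp add: sum_distrib_right norm_sq_rows power_mult_distrib)
  finally show ?thesis by (rule power2_le_imp_le) simp
qed

lemma norm_mm_le: "norm ((A::real^'m^'n) ** (B::real^'p^'m)) \<le> norm A * norm B"
proof -
  have "(norm (A ** B))^2 = (\<Sum>i\<in>UNIV. \<Sum>j\<in>UNIV. (A$i \<bullet> transpose B $ j)^2)"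
    unfolding power2_norm_eq_inner by (simp add: inner_vec_def matrix_matrix_mult_def transpose_def power2_eq_square mult_ac)
  also have "\<dots> \<le> (\<Sum>i\<in>UNIV. \<Sum>j\<in>UNIV. (norm (A$i))^2 * (norm (transpose B $ j))^2)"
    by (rule sum_mono)+ (rule CS_sq)
  also have "\<dots> = (\<Sum>i\<in>UNIV. (norm (A$i))^2) * (\<Sum>j\<in>UNIV. (norm (transpose B $ j))^2)"
    by (rule sum_product[symmetric])
  also have "\<dots> = (norm A * norm B)^2"
    by (simp only: norm_sq_rows[symmetric] power_mult_distrib norm_transpose)
  finally show ?thesis by (rule power2_le_imp_le) simp
qed


lemma mm_add_l: "((A::real^'m^'n) + B) ** (C::real^'p^'m) = A ** C + B ** C"
  by (simp add: matrix_matrix_mult_def vec_eq_iff sum.distrib distrib_right)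
lemma mm_add_r: "(A::real^'m^'n) ** ((B::real^'p^'m) + C) = A ** B + A ** C"
  by (rule matrix_add_ldistrib)
lemma mm_diff_l: "((A::real^'m^'n) - B) ** (C::real^'p^'m) = A ** C - B ** C"
  by (simp add: matrix_matrix_mult_def vec_eq_iff sum_subtractf left_diff_distrib)
lemma mm_diff_r: "(A::real^'m^'n) ** ((B::real^'p^'m) - C) = A ** B - A ** C"
  by (simp add: matrix_matrix_mult_def vec_eq_iff sum_subtractf right_diff_distrib)
lemma mm_scale_l: "(k *\<^sub>R (A::real^'m^'n)) ** (B::real^'p^'m) = k *\<^sub>R (A ** B)"
  by (simp add: scalar_matrix_assoc)
lemma mm_scale_r: "(A::real^'m^'n) ** (k *\<^sub>R (B::real^'p^'m)) = k *\<^sub>R (A ** B)"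
  by (simp add: matrix_matrix_mult_def vec_eq_iff sum_distrib_left mult_ac)
lemma tr_add: "transpose ((A::real^'m^'n) + B) = transpose A + transpose B"
  by (simp add: transpose_def vec_eq_iff)
lemma tr_diff: "transpose ((A::real^'m^'n) - B) = transpose A - transpose B"
  by (simp add: transpose_def vec_eq_iff)
lemma tr_scale: "transpose (k *\<^sub>R (A::real^'m^'n)) = k *\<^sub>R transpose A"
  by (simp add: transpose_def vec_eq_iff)
lemma tr_mm: "transpose ((A::real^'m^'n) ** (B::real^'p^'m)) = transpose B ** transpose A"
  by (rule matrix_transpose_mul)
lemma tr_zero: "transpose (0::real^'m^'n) = 0"
  by (simp add: transpose_def vec_eq_iff)

lemma mm_neg_r: "(A::real^'m^'n) ** (- (B::real^'p^'m)) = - (A ** B)"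
  by (simp add: matrix_matrix_mult_def vec_eq_iff sum_negf)
lemma mm_neg_l: "(- (A::real^'m^'n)) ** (B::real^'p^'m) = - (A ** B)"
  by (simp add: matrix_matrix_mult_def vec_eq_iff sum_negf)
lemma tr_neg: "transpose (- (A::real^'m^'n)) = - transpose A"
  by (simp add: transpose_def vec_eq_iff)

lemmas mm_simps = mm_neg_r mm_neg_l tr_neg mm_add_l mm_add_r mm_diff_l mm_diff_r mm_scale_l mm_scale_r tr_add tr_diff tr_scale tr_mm
   matrix_mul_assoc transpose_transpose tr_zero

lemma egrad_eqI:
  assumes "(\<phi> has_derivative (\<lambda>H. G \<bullet> H)) (at X)"
  shows "egrad \<phi> X = G"
  unfolding egrad_def
proof (rule the_equality)
  show "(\<phi> has_derivative (\<lambda>H. G \<bullet> H)) (at X)" by (rule assms)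
  fix G' assume "(\<phi> has_derivative (\<lambda>H. G' \<bullet> H)) (at X)"
  with assms have "(\<lambda>H. G \<bullet> H) = (\<lambda>H. G' \<bullet> H)" by (rule has_derivative_unique)
  hence "G' \<bullet> (G' - G) = G \<bullet> (G' - G)" by metis
  hence "(G' - G) \<bullet> (G' - G) = 0" by (simp add: inner_diff_left)
  thus "G' = G" by simp
qed

lemma diff_rep:
  fixes \<phi> :: "'a::euclidean_space \<Rightarrow> real"
  assumes "\<phi> differentiable (at X)"
  shows "\<exists>G. (\<phi> has_derivative (\<lambda>H. G \<bullet> H)) (at X)"
proof -
  obtain f' where d: "(\<phi> has_derivative f') (at X)" using assms differentiable_def by blast
  hence lin: "linear f'" using has_derivative_linear by blast
  define G where "G = (\<Sum>b\<in>Basis. f' b *\<^sub>R b)"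
  have "f' H = G \<bullet> H" for H
  proof -
    have "f' H = f' (\<Sum>b\<in>Basis. (H \<bullet> b) *\<^sub>R b)" by (simp add: euclidean_representation)
    also have "\<dots> = (\<Sum>b\<in>Basis. (H \<bullet> b) * f' b)"
      using lin by (simp add: linear_sum linear_scale)
    also have "\<dots> = G \<bullet> H" unfolding G_def by (simp add: inner_sum_right inner_commute mult.commute)
    finally show ?thesis .
  qed
  hence "f' = (\<lambda>H. G \<bullet> H)" by auto
  with d show ?thesis by auto
qed

lemma egrad_works:
  fixes \<phi> :: "real^'p^'n \<Rightarrow> real"
  assumes "\<phi> differentiable (at X)"
  shows "(\<phi> has_derivative (\<lambda>H. egrad \<phi> X \<bullet> H)) (at X)"
proof -
  obtain G where "(\<phi> has_derivative (\<lambda>H. G \<bullet> H)) (at X)" using diff_rep[OF assms] by blast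
  moreover then have "egrad \<phi> X = G" by (rule egrad_eqI)
  ultimately show ?thesis by simp
qed

lemma bb_mm: "bounded_bilinear ((**) :: real^'m^'n \<Rightarrow> real^'p^'m \<Rightarrow> real^'p^'n)"
proof -
  have "bilinear ((**) :: real^'m^'n \<Rightarrow> real^'p^'m \<Rightarrow> real^'p^'n)"
    unfolding bilinear_def
    by (auto intro!: linearI simp: matrix_add_ldistrib mm_add_l mm_scale_l mm_scale_r)
  thus ?thesis by (simp add: bilinear_conv_bounded_bilinear)
qed

lemma bl_transpose: "bounded_linear (transpose :: real^'m^'n \<Rightarrow> real^'n^'m)"
proof -
  have "linear (transpose :: real^'m^'n \<Rightarrow> real^'n^'m)"
    by (auto intro!: linearI simp: vec_eq_iff transpose_def)
  thus ?thesis by (simp add: linear_conv_bounded_linear)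
qed

lemma transpose_deriv: "((transpose :: real^'m^'n \<Rightarrow> real^'n^'m) has_derivative transpose) F"
  using bl_transpose by (rule bounded_linear_imp_has_derivative)

lemma mm_deriv:
  assumes "(f has_derivative f') (at x)" "(g has_derivative g') (at x)"
  shows "((\<lambda>x. (f x :: real^'m^'n) ** (g x :: real^'p^'m)) has_derivative (\<lambda>h. f x ** g' h + f' h ** g x)) (at x)"
  using bounded_bilinear.FDERIV[OF bb_mm assms] .

lemma XtX_deriv:
  "((\<lambda>X::real^'p^'n. transpose X ** X) has_derivative (\<lambda>H. transpose X ** H + transpose H ** X)) (at X)"
  by (rule mm_deriv[OF transpose_deriv has_derivative_ident])

lemma XA_deriv:
  "((\<lambda>X::real^'p^'n. X ** Amap X) has_derivative
     (\<lambda>H. H ** Amap X - (1/2) *\<^sub>R (X ** (transpose H ** X + transpose X ** H)))) (at X)"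
proof -
  have a: "(Amap has_derivative (\<lambda>H. - (1/2) *\<^sub>R (transpose X ** H + transpose H ** X))) (at X)"
    unfolding Amap_def[abs_def]
    by (rule derivative_eq_intros XtX_deriv | simp)+
  show ?thesis
    using mm_deriv[OF has_derivative_ident a]
    by (simp add: mm_simps algebra_simps)
qed

definition gradg :: "(real^'p^'n \<Rightarrow> real) \<Rightarrow> real^'p^'n \<Rightarrow> real^'p^'n" where
  "gradg f X = Gfun f X ** Amap X - X ** symPart (transpose X ** Gfun f X)"

lemma Amap_sym: "transpose (Amap X) = Amap X"
  by (simp add: Amap_def mm_simps)

lemma gfun_deriv:
  fixes f :: "real^'p^'n \<Rightarrow> real" and X :: "real^'p^'n"
  assumes diff: "\<forall>Y. f differentiable (at Y)"
  shows "(gfun f has_derivative (\<lambda>H. gradg f X \<bullet> H)) (at X)"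
proof -
  define G where "G = Gfun f X"
  define A where "A = Amap X"
  have d: "((\<lambda>X. f (X ** Amap X)) has_derivative
     (\<lambda>H. G \<bullet> (H ** Amap X - (1/2) *\<^sub>R (X ** (transpose H ** X + transpose X ** H))))) (at X)"
    unfolding G_def Gfun_def
    by (rule has_derivative_compose[OF XA_deriv egrad_works]) (use diff in blast)
  have eq: "G \<bullet> (H ** A - (1/2) *\<^sub>R (X ** (transpose H ** X + transpose X ** H))) = gradg f X \<bullet> H" for H
  proof -
    have e1: "G \<bullet> (H ** A) = (G ** A) \<bullet> H"
      using inner_mul_right[of G H A] by (simp add: A_def Amap_sym)
    have "G \<bullet> (X ** (transpose H ** X)) = (transpose X ** G) \<bullet> (transpose H ** X)"
      by (rule inner_mul_left)
    also have "\<dots> = ((transpose X ** G) ** transpose X) \<bullet> transpose H"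
      by (rule inner_mul_right)
    also have "\<dots> = (X ** transpose G ** X) \<bullet> H"
      by (simp add: inner_transpose mm_simps)
    finally have e2: "G \<bullet> (X ** (transpose H ** X)) = (X ** transpose G ** X) \<bullet> H" .
    have e3: "G \<bullet> (X ** (transpose X ** H)) = (X ** transpose X ** G) \<bullet> H"
      using inner_mul_left[of G X "transpose X ** H"] inner_mul_left[of "transpose X ** G" "transpose X" H]
      by (simp add: mm_simps)
    have "gradg f X = G ** A - (1/2) *\<^sub>R (X ** transpose X ** G + X ** transpose G ** X)"
      unfolding gradg_def G_def A_def symPart_def by (simp add: mm_simps algebra_simps)
    hence "gradg f X \<bullet> H = (G ** A) \<bullet> H - (1/2) * ((X ** transpose X ** G) \<bullet> H + (X ** transpose G ** X) \<bullet> H)"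
      by (simp add: inner_diff_left inner_add_left)
    moreover have "G \<bullet> (H ** A - (1/2) *\<^sub>R (X ** (transpose H ** X + transpose X ** H)))
       = G \<bullet> (H ** A) - (1/2) * (G \<bullet> (X ** (transpose H ** X)) + G \<bullet> (X ** (transpose X ** H)))"
      by (simp add: inner_diff_right inner_add_right mm_add_r)
    ultimately show ?thesis using e1 e2 e3 by simp
  qed
  show ?thesis
    using d unfolding gfun_def[abs_def] eq[unfolded A_def] .
qed

lemma egrad_gfun:
  assumes "\<forall>Y. f differentiable (at Y)"
  shows "egrad (gfun f) X = gradg f X"
  by (rule egrad_eqI[OF gfun_deriv[OF assms]])

lemma hfun_deriv:
  fixes f :: "real^'p^'n \<Rightarrow> real" and X :: "real^'p^'n"
  assumes diff: "\<forall>Y. f differentiable (at Y)"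
  shows "(hfun f \<beta> has_derivative
     (\<lambda>H. (gradg f X + \<beta> *\<^sub>R (X ** (transpose X ** X - mat 1))) \<bullet> H)) (at X)"
proof -
  define E where "E = transpose X ** X - mat 1"
  have Esym: "transpose E = E" by (simp add: E_def mm_simps)
  have dE: "((\<lambda>X::real^'p^'n. transpose X ** X - mat 1) has_derivative (\<lambda>H. transpose X ** H + transpose H ** X)) (at X)"
    using has_derivative_diff[OF XtX_deriv[of X] has_derivative_const[of "mat 1"]] by simp
  have dN: "((\<lambda>X::real^'p^'n. (transpose X ** X - mat 1) \<bullet> (transpose X ** X - mat 1)) has_derivative
      (\<lambda>H. E \<bullet> (transpose X ** H + transpose H ** X) + (transpose X ** H + transpose H ** X) \<bullet> E)) (at X)"
    unfolding E_def by (rule bounded_bilinear.FDERIV[OF bounded_bilinear_inner dE dE])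
  have eq: "E \<bullet> (transpose X ** H + transpose H ** X) + (transpose X ** H + transpose H ** X) \<bullet> E
      = 4 * ((X ** E) \<bullet> H)" for H
  proof -
    have a: "E \<bullet> (transpose X ** H) = (X ** E) \<bullet> H"
      using inner_mul_left[of E "transpose X" H] by simp
    have "E \<bullet> (transpose H ** X) = (E ** transpose X) \<bullet> transpose H" by (rule inner_mul_right)
    also have "\<dots> = (X ** E) \<bullet> H" by (simp add: inner_transpose mm_simps Esym)
    finally have b: "E \<bullet> (transpose H ** X) = (X ** E) \<bullet> H" .
    show ?thesis using a b by (simp add: inner_add_right inner_add_left inner_commute[of _ E])
  qed
  have dN2: "((\<lambda>X::real^'p^'n. \<beta>/4 * (norm (transpose X ** X - mat 1))\<^sup>2) has_derivative
      (\<lambda>H. \<beta> * ((X ** E) \<bullet> H))) (at X)"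
    unfolding power2_norm_eq_inner
    using has_derivative_mult_right[OF dN, of "\<beta>/4"] unfolding eq by simp
  have "((\<lambda>X. gfun f X + \<beta>/4 * (norm (transpose X ** X - mat 1))\<^sup>2) has_derivative
      (\<lambda>H. gradg f X \<bullet> H + \<beta> * ((X ** E) \<bullet> H))) (at X)"
    by (rule has_derivative_add[OF gfun_deriv[OF diff] dN2])
  thus ?thesis unfolding hfun_def[abs_def] E_def[symmetric]
    by (simp add: inner_add_left)
qed

lemma egrad_hfun:
  assumes "\<forall>Y. f differentiable (at Y)"
  shows "egrad (hfun f \<beta>) X = gradg f X + \<beta> *\<^sub>R (X ** (transpose X ** X - mat 1))"
  by (rule egrad_eqI[OF hfun_deriv[OF assms]])

lemma gradg_stiefel:
  assumes "transpose Y ** Y = mat 1"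
  shows "gradg f Y = rgrad f Y"
proof -
  have A: "Amap Y = mat 1" unfolding Amap_def assms
    by (simp add: vec_eq_iff mat_def)
  show ?thesis unfolding gradg_def rgrad_def Gfun_def A by simp
qed

definition LL :: "('a::real_normed_vector \<Rightarrow> 'b::real_normed_vector) \<Rightarrow> bool" where
  "LL g \<longleftrightarrow> (\<forall>x. \<exists>e>0. \<exists>L B. \<forall>y\<in>ball x e. norm (g y) \<le> B \<and>
      (\<forall>z\<in>ball x e. norm (g y - g z) \<le> L * norm (y - z)))"

lemma LL_I:
  assumes "\<And>x. \<exists>e>0. \<exists>L B. \<forall>y\<in>ball x e. norm (g y) \<le> B \<and>
      (\<forall>z\<in>ball x e. norm (g y - g z) \<le> L * norm (y - z))"
  shows "LL g" using assms unfolding LL_def by blast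

lemma LL_D:
  assumes "LL g"
  obtains e L B where "e > 0" "L \<ge> 0" "\<And>y. y \<in> ball x e \<Longrightarrow> norm (g y) \<le> B"
    "\<And>y z. y \<in> ball x e \<Longrightarrow> z \<in> ball x e \<Longrightarrow> norm (g y - g z) \<le> L * norm (y - z)"
proof -
  obtain e L B where e: "e > 0" and h: "\<forall>y\<in>ball x e. norm (g y) \<le> B \<and>
      (\<forall>z\<in>ball x e. norm (g y - g z) \<le> L * norm (y - z))"
    using assms unfolding LL_def by blast
  have "norm (g y - g z) \<le> \<bar>L\<bar> * norm (y - z)" if "y \<in> ball x e" "z \<in> ball x e" for y z
  proof -
    have "norm (g y - g z) \<le> L * norm (y - z)" using h that by blast
    also have "\<dots> \<le> \<bar>L\<bar> * norm (y - z)" by (rule mult_right_mono) auto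
    finally show ?thesis .
  qed
  thus ?thesis using that[of e "\<bar>L\<bar>" B] e h by auto
qed

lemma loc_lipschitz_LL:
  assumes "loc_lipschitz (g::'a::real_normed_vector \<Rightarrow> 'b::real_normed_vector)"
  shows "LL g"
proof (rule LL_I)
  fix x
  obtain e L where e: "e > 0" and h: "\<forall>y\<in>ball x e. \<forall>z\<in>ball x e. dist (g y) (g z) \<le> L * dist y z"
    using assms unfolding loc_lipschitz_def by blast
  have "norm (g y) \<le> norm (g x) + \<bar>L\<bar> * e" if "y \<in> ball x e" for y
  proof -
    have xin: "x \<in> ball x e" using e by simp
    have "norm (g y - g x) \<le> L * norm (y - x)" using h that xin by (simp add: dist_norm)
    also have "\<dots> \<le> \<bar>L\<bar> * norm (y - x)" by (rule mult_right_mono) auto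
    also have "\<dots> \<le> \<bar>L\<bar> * e" using that by (intro mult_left_mono) (auto simp: dist_norm norm_minus_commute)
    finally have "norm (g y - g x) \<le> \<bar>L\<bar> * e" .
    moreover have "norm (g y) \<le> norm (g x) + norm (g y - g x)" by (rule norm_triangle_sub)
    ultimately show ?thesis by linarith
  qed
  moreover have "norm (g y - g z) \<le> L * norm (y - z)" if "y \<in> ball x e" "z \<in> ball x e" for y z
    using h that by (simp add: dist_norm)
  ultimately show "\<exists>e>0. \<exists>L B. \<forall>y\<in>ball x e. norm (g y) \<le> B \<and>
      (\<forall>z\<in>ball x e. norm (g y - g z) \<le> L * norm (y - z))" using e by blast
qed

lemma LL_compose:
  assumes g: "LL g" and h: "LL h"
  shows "LL (\<lambda>x. g (h x))"
proof (rule LL_I)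
  fix x
  obtain e1 L1 B1 where e1: "e1 > 0" "L1 \<ge> 0"
    and h2: "\<And>y z. y \<in> ball x e1 \<Longrightarrow> z \<in> ball x e1 \<Longrightarrow> norm (h y - h z) \<le> L1 * norm (y - z)"
    using LL_D[OF h, of x] by metis
  obtain e2 L2 B2 where e2: "e2 > 0" "L2 \<ge> 0"
    and g1: "\<And>y. y \<in> ball (h x) e2 \<Longrightarrow> norm (g y) \<le> B2"
    and g2: "\<And>y z. y \<in> ball (h x) e2 \<Longrightarrow> z \<in> ball (h x) e2 \<Longrightarrow> norm (g y - g z) \<le> L2 * norm (y - z)"
    using LL_D[OF g, of "h x"] by metis
  define e where "e = min e1 (e2 / (L1 + 1))"
  have epos: "e > 0" using e1 e2 by (simp add: e_def)
  have inb: "h y \<in> ball (h x) e2" if y: "y \<in> ball x e" for y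
  proof -
    have y1: "y \<in> ball x e1" using y by (simp add: e_def)
    have xx: "x \<in> ball x e1" using e1 by simp
    have "norm (h y - h x) \<le> L1 * norm (y - x)" using h2[OF y1 xx] .
    also have "\<dots> \<le> (L1 + 1) * norm (y - x)" by (rule mult_right_mono) auto
    also have "\<dots> < (L1 + 1) * (e2 / (L1 + 1))"
    proof (rule mult_strict_left_mono)
      have "norm (y - x) < e" using y by (simp add: dist_norm norm_minus_commute)
      thus "norm (y - x) < e2 / (L1 + 1)" by (simp add: e_def)
    qed (use e1 in simp)
    also have "\<dots> = e2" using e1 by simp
    finally show ?thesis by (simp add: dist_norm norm_minus_commute)
  qed
  have "norm (g (h y)) \<le> B2" if "y \<in> ball x e" for y using g1[OF inb[OF that]] .
  moreover have "norm (g (h y) - g (h z)) \<le> (L2 * L1) * norm (y - z)" if "y \<in> ball x e" "z \<in> ball x e" for y z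
  proof -
    have "norm (g (h y) - g (h z)) \<le> L2 * norm (h y - h z)" using g2 inb that by blast
    also have "\<dots> \<le> L2 * (L1 * norm (y - z))"
      using h2[of y z] that e2 by (intro mult_left_mono) (auto simp: e_def)
    finally show ?thesis by (simp add: mult.assoc)
  qed
  ultimately show "\<exists>e>0. \<exists>L B. \<forall>y\<in>ball x e. norm (g (h y)) \<le> B \<and>
      (\<forall>z\<in>ball x e. norm (g (h y) - g (h z)) \<le> L * norm (y - z))" using epos by blast
qed

lemma LL_linear:
  assumes "bounded_linear h"
  shows "LL h"
proof (rule LL_I)
  fix x
  obtain K where K: "\<And>x. norm (h x) \<le> norm x * K" using bounded_linear.bounded[OF assms] by blast
  have "norm (h y) \<le> (norm x + 1) * \<bar>K\<bar>" if "y \<in> ball x 1" for y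
  proof -
    have "norm (h y) \<le> norm y * K" by (rule K)
    also have "\<dots> \<le> norm y * \<bar>K\<bar>" by (rule mult_left_mono) auto
    also have "\<dots> \<le> (norm x + 1) * \<bar>K\<bar>"
    proof (rule mult_right_mono)
      have "norm y \<le> norm x + norm (y - x)" by (rule norm_triangle_sub[of y x, simplified add.commute]) 
      moreover have "norm (y - x) < 1" using that by (simp add: dist_norm norm_minus_commute)
      ultimately show "norm y \<le> norm x + 1" by linarith
    qed auto
    finally show ?thesis .
  qed
  moreover have "norm (h y - h z) \<le> K * norm (y - z)" for y z
  proof -
    have "h y - h z = h (y - z)" by (simp add: linear_diff bounded_linear.linear[OF assms])
    thus ?thesis using K[of "y - z"] by (simp add: mult.commute)
  qed
  ultimately show "\<exists>e>0. \<exists>L B. \<forall>y\<in>ball x e. norm (h y) \<le> B \<and>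
      (\<forall>z\<in>ball x e. norm (h y - h z) \<le> L * norm (y - z))" using zero_less_one by blast
qed

lemma LL_const: "LL (\<lambda>x. c)"
proof (rule LL_I)
  fix x
  have "\<forall>y\<in>ball x 1. norm c \<le> norm c \<and> (\<forall>z\<in>ball x 1. norm (c - c) \<le> 0 * norm (y - z))" by simp
  thus "\<exists>e>0. \<exists>L B. \<forall>y\<in>ball x e. norm c \<le> B \<and> (\<forall>z\<in>ball x e. norm (c - c) \<le> L * norm (y - z))"
    using zero_less_one by blast
qed

lemma LL_add:
  assumes g: "LL g" and h: "LL h"
  shows "LL (\<lambda>x. g x + h x)"
proof (rule LL_I)
  fix x
  obtain e1 L1 B1 where e1: "e1 > 0" and a1: "\<And>y. y \<in> ball x e1 \<Longrightarrow> norm (g y) \<le> B1"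
    and a2: "\<And>y z. y \<in> ball x e1 \<Longrightarrow> z \<in> ball x e1 \<Longrightarrow> norm (g y - g z) \<le> L1 * norm (y - z)"
    using LL_D[OF g, of x] by metis
  obtain e2 L2 B2 where e2: "e2 > 0" and b1: "\<And>y. y \<in> ball x e2 \<Longrightarrow> norm (h y) \<le> B2"
    and b2: "\<And>y z. y \<in> ball x e2 \<Longrightarrow> z \<in> ball x e2 \<Longrightarrow> norm (h y - h z) \<le> L2 * norm (y - z)"
    using LL_D[OF h, of x] by metis
  define e where "e = min e1 e2"
  have "norm (g y + h y) \<le> B1 + B2" if "y \<in> ball x e" for y
    using a1[of y] b1[of y] that norm_triangle_ineq[of "g y" "h y"] by (simp add: e_def)
  moreover have "norm ((g y + h y) - (g z + h z)) \<le> (L1 + L2) * norm (y - z)" if "y \<in> ball x e" "z \<in> ball x e" for y z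
  proof -
    have "norm ((g y + h y) - (g z + h z)) \<le> norm (g y - g z) + norm (h y - h z)"
      using norm_triangle_ineq[of "g y - g z" "h y - h z"] by (simp add: algebra_simps)
    thus ?thesis using a2[of y z] b2[of y z] that by (simp add: e_def algebra_simps)
  qed
  ultimately show "\<exists>e>0. \<exists>L B. \<forall>y\<in>ball x e. norm (g y + h y) \<le> B \<and>
      (\<forall>z\<in>ball x e. norm ((g y + h y) - (g z + h z)) \<le> L * norm (y - z))"
    using e1 e2 min_less_iff_conj[of 0 e1 e2] unfolding e_def[symmetric] by blast
qed

lemma LL_mm:
  fixes g :: "'a::real_normed_vector \<Rightarrow> real^'m^'n" and h :: "'a \<Rightarrow> real^'p^'m"
  assumes g: "LL g" and h: "LL h"
  shows "LL (\<lambda>x. g x ** h x)"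
proof (rule LL_I)
  fix x
  obtain e1 L1 B1 where e1: "e1 > 0" "L1 \<ge> 0" and a1: "\<And>y. y \<in> ball x e1 \<Longrightarrow> norm (g y) \<le> B1"
    and a2: "\<And>y z. y \<in> ball x e1 \<Longrightarrow> z \<in> ball x e1 \<Longrightarrow> norm (g y - g z) \<le> L1 * norm (y - z)"
    using LL_D[OF g, of x] by metis
  obtain e2 L2 B2 where e2: "e2 > 0" "L2 \<ge> 0" and b1: "\<And>y. y \<in> ball x e2 \<Longrightarrow> norm (h y) \<le> B2"
    and b2: "\<And>y z. y \<in> ball x e2 \<Longrightarrow> z \<in> ball x e2 \<Longrightarrow> norm (h y - h z) \<le> L2 * norm (y - z)"
    using LL_D[OF h, of x] by metis
  define e where "e = min e1 e2"
  have "norm (g y ** h y) \<le> B1 * B2" if "y \<in> ball x e" for y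
  proof -
    have "norm (g y ** h y) \<le> norm (g y) * norm (h y)" by (rule norm_mm_le)
    also have "\<dots> \<le> B1 * B2" using a1[of y] b1[of y] that
      by (intro mult_mono) (auto simp: e_def intro: order_trans[OF norm_ge_zero])
    finally show ?thesis .
  qed
  moreover have "norm (g y ** h y - g z ** h z) \<le> (B1 * L2 + L1 * B2) * norm (y - z)"
    if y: "y \<in> ball x e" and z: "z \<in> ball x e" for y z
  proof -
    have y1: "y \<in> ball x e1" and y2: "y \<in> ball x e2" and z1: "z \<in> ball x e1" and z2: "z \<in> ball x e2"
      using y z by (auto simp: e_def)
    have "g y ** h y - g z ** h z = g y ** (h y - h z) + (g y - g z) ** h z"
      by (simp add: mm_simps)
    hence "norm (g y ** h y - g z ** h z) \<le> norm (g y ** (h y - h z)) + norm ((g y - g z) ** h z)"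
      by (metis norm_triangle_ineq)
    also have "\<dots> \<le> norm (g y) * norm (h y - h z) + norm (g y - g z) * norm (h z)"
      by (intro add_mono norm_mm_le)
    also have "\<dots> \<le> B1 * (L2 * norm (y - z)) + (L1 * norm (y - z)) * B2"
      using a1[OF y1] b2[OF y2 z2] a2[OF y1 z1] b1[OF z2]
      by (intro add_mono mult_mono) (auto intro: order_trans[OF norm_ge_zero])
    finally show ?thesis by (simp add: algebra_simps)
  qed
  ultimately show "\<exists>e>0. \<exists>L B. \<forall>y\<in>ball x e. norm (g y ** h y) \<le> B \<and>
      (\<forall>z\<in>ball x e. norm (g y ** h y - g z ** h z) \<le> L * norm (y - z))"
    using e1 e2 min_less_iff_conj[of 0 e1 e2] unfolding e_def[symmetric] by blast
qed

lemma LL_id: "LL (\<lambda>x. x)"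
  by (rule LL_linear) (rule bounded_linear_ident)

lemma LL_scale:
  assumes "LL g" shows "LL (\<lambda>x. c *\<^sub>R g x)"
  using LL_compose[OF LL_linear[OF bounded_linear_scaleR_right] assms] .

lemma LL_minus:
  assumes "LL g" shows "LL (\<lambda>x. - g x)"
  using LL_compose[OF LL_linear[OF bounded_linear_minus[OF bounded_linear_ident]] assms] by simp

lemma LL_diff:
  assumes "LL g" "LL h" shows "LL (\<lambda>x. g x - h x)"
  using LL_add[OF assms(1) LL_minus[OF assms(2)]] by simp

lemma LL_transpose:
  fixes g :: "'a::real_normed_vector \<Rightarrow> real^'m^'n"
  assumes "LL g" shows "LL (\<lambda>x. transpose (g x))"
  using LL_compose[OF LL_linear[OF bl_transpose] assms] .

lemma LL_gradg:
  fixes f :: "real^'p^'n \<Rightarrow> real"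
  assumes "loc_lipschitz (egrad f)"
  shows "LL (gradg f)"
proof -
  have A: "LL (Amap :: real^'p^'n \<Rightarrow> real^'p^'p)"
    unfolding Amap_def[abs_def]
    by (intro LL_diff LL_const LL_scale LL_mm LL_transpose LL_id)
  have XA: "LL (\<lambda>X::real^'p^'n. X ** Amap X)" by (intro LL_mm LL_id A)
  have G: "LL (Gfun f)"
    unfolding Gfun_def[abs_def] by (rule LL_compose[OF loc_lipschitz_LL[OF assms] XA])
  show ?thesis
    unfolding gradg_def[abs_def] symPart_def
    by (intro LL_diff LL_mm G A LL_id LL_scale LL_add LL_transpose)
qed

lemma Omega_iff: "(X::real^'p^'n) \<in> OmegaSet \<longleftrightarrow> (\<forall>v. norm (X *v v) \<le> (13/12) * norm v)"
proof
  assume "X \<in> OmegaSet"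
  hence o: "onorm ((*v) X) \<le> 13/12" by (simp add: OmegaSet_def)
  show "\<forall>v. norm (X *v v) \<le> (13/12) * norm v"
  proof
    fix v
    have "norm (X *v v) \<le> onorm ((*v) X) * norm v" by (rule onorm) simp
    also have "\<dots> \<le> (13/12) * norm v" using o by (rule mult_right_mono) simp
    finally show "norm (X *v v) \<le> (13/12) * norm v" .
  qed
next
  assume "\<forall>v. norm (X *v v) \<le> (13/12) * norm v"
  hence "onorm ((*v) X) \<le> 13/12" by (intro onorm_le) auto
  thus "X \<in> OmegaSet" by (simp add: OmegaSet_def)
qed

lemma Omega_closed: "closed (OmegaSet :: (real^'p^'n) set)"
proof -
  have eq: "OmegaSet = (\<Inter>v. {X::real^'p^'n. norm (X *v v) \<le> (13/12) * norm v})"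
    by (auto simp: Omega_iff)
  have cl: "closed {X::real^'p^'n. norm (X *v v) \<le> (13/12) * norm v}" for v
  proof -
    have "linear (\<lambda>X::real^'p^'n. X *v v)"
      by (auto intro!: linearI simp: vec_eq_iff matrix_vector_mult_def sum.distrib sum_distrib_left distrib_right mult.assoc)
    hence "continuous_on UNIV (\<lambda>X::real^'p^'n. X *v v)" by (rule linear_continuous_on[OF linear_conv_bounded_linear[THEN iffD1]])
    hence "continuous_on UNIV (\<lambda>X::real^'p^'n. norm (X *v v))" by (intro continuous_intros)
    thus ?thesis by (intro closed_Collect_le) (auto intro: continuous_intros)
  qed
  show ?thesis unfolding eq by (rule closed_INT) (rule ballI, rule cl)
qed

lemma Omega_bounded: "bounded (OmegaSet :: (real^'p^'n) set)"
proof -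
  have "norm X \<le> real CARD('n) * (real CARD('p) * (13/12))" if "X \<in> (OmegaSet :: (real^'p^'n) set)" for X
  proof -
    have ent: "\<bar>X$i$j\<bar> \<le> 13/12" for i j
    proof -
      have "(X *v axis j 1) $ i = X$i$j"
        by (simp add: matrix_vector_mult_def axis_def if_distrib cong: if_cong)
      hence "\<bar>X$i$j\<bar> \<le> norm (X *v axis j 1)" by (metis component_le_norm_cart)
      also have "\<dots> \<le> 13/12 * norm (axis j (1::real))" using that unfolding Omega_iff by blast
      finally show ?thesis by simp
    qed
    have row: "norm (X$i) \<le> real CARD('p) * (13/12)" for i
    proof -
      have "norm (X$i) \<le> (\<Sum>j\<in>UNIV. \<bar>X$i$j\<bar>)" by (rule norm_le_l1_cart)
      also have "\<dots> \<le> (\<Sum>j\<in>(UNIV::'p set). 13/12)" by (rule sum_mono) (rule ent)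
      finally show ?thesis by simp
    qed
    have "norm X \<le> (\<Sum>i\<in>UNIV. norm (X$i))" by (simp add: norm_vec_def L2_set_le_sum)
    also have "\<dots> \<le> (\<Sum>i\<in>(UNIV::'n set). real CARD('p) * (13/12))" by (rule sum_mono) (rule row)
    finally show ?thesis by simp
  qed
  thus ?thesis unfolding bounded_iff by blast
qed

lemma Omega_compact: "compact (OmegaSet :: (real^'p^'n) set)"
  using Omega_closed Omega_bounded by (simp add: compact_eq_bounded_closed)

lemma LL_lipschitz_compact:
  fixes g :: "'a::real_normed_vector \<Rightarrow> 'b::real_normed_vector"
  assumes "LL g" "compact K"
  obtains L where "L-lipschitz_on K g"
proof -
  have "local_lipschitz {0::real} K (\<lambda>t. g)"
  proof (rule local_lipschitzI)
    fix t x assume "t \<in> {0::real}" "x \<in> K"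
    obtain e L B where e: "e > 0" "L \<ge> 0"
      and h: "\<And>y z. y \<in> ball x e \<Longrightarrow> z \<in> ball x e \<Longrightarrow> norm (g y - g z) \<le> L * norm (y - z)"
      using LL_D[OF assms(1), of x] by metis
    have "L-lipschitz_on (cball x (e/2) \<inter> K) g"
    proof (rule lipschitz_onI)
      fix y z assume "y \<in> cball x (e/2) \<inter> K" "z \<in> cball x (e/2) \<inter> K"
      hence "y \<in> ball x e" "z \<in> ball x e" using e by auto
      thus "dist (g y) (g z) \<le> L * dist y z" using h by (simp add: dist_norm)
    qed (rule e(2))
    thus "\<exists>u>0. \<exists>L. \<forall>t\<in>cball t u \<inter> {0}. L-lipschitz_on (cball x u \<inter> K) g"
      using e(1) by (intro exI[of _ "e/2"]) auto
  qed
  from local_lipschitz_compact_implies_lipschitz[OF this assms(2)]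
  show ?thesis using that by auto
qed

lemma M2_bound:
  fixes f :: "real^'p^'n \<Rightarrow> real"
  assumes diff: "\<forall>Y. f differentiable (at Y)" and ll: "loc_lipschitz (egrad f)"
    and X: "X \<in> OmegaSet" and Y: "Y \<in> OmegaSet" and ne: "X \<noteq> Y"
  shows "norm (gradg f X - gradg f Y) \<le> M2 f * norm (X - Y)"
proof -
  obtain L where L: "L-lipschitz_on (OmegaSet :: (real^'p^'n) set) (gradg f)"
    using LL_lipschitz_compact[OF LL_gradg[OF ll] Omega_compact] by blast
  define S where "S = {norm (egrad (gfun f) X - egrad (gfun f) Y) / norm (X - Y) | X Y.
                 X \<in> (OmegaSet::(real^'p^'n) set) \<and> Y \<in> OmegaSet \<and> X \<noteq> Y}"
  have "s \<le> L" if "s \<in> S" for s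
  proof -
    obtain X' Y' where s: "s = norm (gradg f X' - gradg f Y') / norm (X' - Y')"
      and X': "X' \<in> OmegaSet" and Y': "Y' \<in> OmegaSet" and ne': "X' \<noteq> Y'"
      using \<open>s \<in> S\<close> unfolding S_def egrad_gfun[OF diff] by blast
    have "norm (gradg f X' - gradg f Y') \<le> L * norm (X' - Y')"
      using lipschitz_onD[OF L X' Y'] by (simp add: dist_norm)
    thus ?thesis unfolding s using ne' by (simp add: divide_le_eq)
  qed
  hence bdd: "bdd_above S" by (intro bdd_aboveI[of _ L]) blast
  have mem: "norm (gradg f X - gradg f Y) / norm (X - Y) \<in> S"
    unfolding S_def egrad_gfun[OF diff] using X Y ne by blast
  have "norm (gradg f X - gradg f Y) / norm (X - Y) \<le> M2 f"
    unfolding M2_def S_def[symmetric] by (rule cSup_upper[OF mem bdd])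
  thus ?thesis using ne by (simp add: divide_le_eq)
qed

lemma sym_inner:
  fixes A :: "real^'p^'p"
  assumes "transpose A = A"
  shows "x \<bullet> (A *v y) = (A *v x) \<bullet> y"
proof -
  have "(A *v x) \<bullet> y = (transpose A *v x) \<bullet> y" using assms by simp
  also have "\<dots> = (x v* A) \<bullet> y" by simp
  also have "\<dots> = x \<bullet> (A *v y)" by (rule dot_lmul_matrix)
  finally show ?thesis by simp
qed

lemma eig_step:
  fixes A :: "real^'p^'p" and v :: "'p \<Rightarrow> real^'p" and F :: "'p set"
  assumes sym: "transpose A = A" and iF: "i \<notin> F"
    and ev: "\<forall>j\<in>F. A *v v j = \<mu> j *\<^sub>R v j"
  shows "\<exists>w c. norm w = 1 \<and> A *v w = c *\<^sub>R w \<and> (\<forall>j\<in>F. v j \<bullet> w = 0)"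
proof -
  define W where "W = {y::real^'p. \<forall>j\<in>F. v j \<bullet> y = 0}"
  define K where "K = sphere (0::real^'p) 1 \<inter> (\<Inter>j\<in>F. {y. v j \<bullet> y = 0})"
  define q where "q = (\<lambda>y::real^'p. y \<bullet> (A *v y))"
  have KW: "K = {y. norm y = 1} \<inter> W" by (auto simp: K_def W_def)
  have cK: "compact K" unfolding K_def
    by (intro compact_Int_closed compact_sphere closed_INT ballI closed_hyperplane)
  have dimlt: "dim (v ` F) < DIM(real^'p)"
  proof -
    have "card F < CARD('p)"
      using iF by (intro psubset_card_mono) auto
    moreover have "dim (v ` F) \<le> card (v ` F)" by (rule dim_le_card') simp
    moreover have "card (v ` F) \<le> card F" by (rule card_image_le) simp
    ultimately show "dim (v ` F) < DIM(real^'p)" by simp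
  qed
  obtain x :: "real^'p" where x0: "x \<noteq> 0" and xo: "\<And>y. y \<in> span (v ` F) \<Longrightarrow> orthogonal x y"
    using orthogonal_to_subspace_exists[OF dimlt] by blast
  have "v j \<bullet> x = 0" if "j \<in> F" for j
    using xo[OF span_base[OF imageI[OF that]]] by (simp add: orthogonal_def inner_commute)
  hence xW: "x \<in> W" unfolding W_def by blast
  have Wsub: "\<And>y z a b. y \<in> W \<Longrightarrow> z \<in> W \<Longrightarrow> a *\<^sub>R y + b *\<^sub>R z \<in> W"
    by (auto simp: W_def inner_add_right)
  have "(1 / norm x) *\<^sub>R x \<in> K" using x0 xW Wsub[of x x "1/norm x" 0] by (auto simp: KW)
  hence Kne: "K \<noteq> {}" by auto
  have cq: "continuous_on K q" unfolding q_def by (intro continuous_intros)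
  obtain w where wK: "w \<in> K" and wmax: "\<And>y. y \<in> K \<Longrightarrow> q y \<le> q w"
    using continuous_attains_sup[OF cK Kne cq] by blast
  have w1: "norm w = 1" and wW: "w \<in> W" using wK by (auto simp: KW)
  have ww: "w \<bullet> w = 1" using w1 by (simp add: norm_eq_1)
  define c where "c = q w"
  have qscale: "q (a *\<^sub>R y) = a^2 * q y" for a y
    by (simp add: q_def matrix_vector_mult_scaleR power2_eq_square)
  have qbound: "q y \<le> c * (y \<bullet> y)" if "y \<in> W" for y
  proof (cases "y = 0")
    case True thus ?thesis by (simp add: q_def)
  next
    case False
    have "(1 / norm y) *\<^sub>R y \<in> K" using False that Wsub[of y y "1/norm y" 0] by (auto simp: KW)
    hence "q ((1 / norm y) *\<^sub>R y) \<le> c" using wmax c_def by blast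
    hence "q y / (norm y)^2 \<le> c" by (simp add: qscale power_divide)
    hence "q y \<le> c * (norm y)^2" using False by (simp add: divide_le_eq)
    thus ?thesis by (simp add: power2_norm_eq_inner)
  qed
  have key: "z \<bullet> (A *v w) = 0" if zW: "z \<in> W" and zw: "z \<bullet> w = 0" for z
  proof -
    define b where "b = z \<bullet> (A *v w)"
    define d where "d = c * (z \<bullet> z) - q z"
    have ineq: "2 * s * b \<le> s^2 * d" for s
    proof -
      have yW: "w + s *\<^sub>R z \<in> W" using Wsub[OF wW zW, of 1 s] by simp
      have wAz: "w \<bullet> (A *v z) = b" unfolding b_def using sym_inner[OF sym, of w z] by (simp add: inner_commute)
      have "q (w + s *\<^sub>R z) = w \<bullet> (A *v w) + s * (w \<bullet> (A *v z)) + s * (z \<bullet> (A *v w)) + s * s * (z \<bullet> (A *v z))"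
        unfolding q_def by (simp add: matrix_vector_mult_scaleR matrix_vector_right_distrib inner_add_left inner_add_right distrib_left mult.assoc)
      also have "\<dots> = q w + 2 * s * b + s^2 * q z"
        unfolding q_def wAz b_def[symmetric] by (simp add: power2_eq_square distrib_left mult.assoc)
      finally have "q (w + s *\<^sub>R z) = q w + 2 * s * b + s^2 * q z" .
      moreover have "(w + s *\<^sub>R z) \<bullet> (w + s *\<^sub>R z) = 1 + s^2 * (z \<bullet> z)"
        using ww zw by (simp add: inner_add_left inner_add_right inner_commute power2_eq_square)
      ultimately have "q w + 2 * s * b + s^2 * q z \<le> c * (1 + s^2 * (z \<bullet> z))" using qbound[OF yW] by simp
      moreover have "s^2 * d = s^2 * c * (z \<bullet> z) - s^2 * q z" by (simp add: d_def right_diff_distrib mult.assoc)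
      moreover have "c * (1 + s^2 * (z \<bullet> z)) = c + s^2 * c * (z \<bullet> z)" by (simp add: distrib_left mult.commute mult.left_commute)
      ultimately show ?thesis unfolding c_def by linarith
    qed
    define k where "k = \<bar>d\<bar> + 1"
    have kpos: "k > 0" by (simp add: k_def)
    have "2 * (b / k) * b \<le> (b / k)^2 * d" by (rule ineq)
    hence "k^2 * (2 * (b / k) * b) \<le> k^2 * ((b / k)^2 * d)" by (rule mult_left_mono) simp
    moreover have "k^2 * (2 * (b / k) * b) = 2 * b * b * k" using kpos by (simp add: power2_eq_square)
    moreover have "k^2 * ((b / k)^2 * d) = b * b * d" using kpos by (simp add: power2_eq_square)
    ultimately have "2 * b * b * k \<le> b * b * d" by simp
    moreover have "b * b * d \<le> b * b * \<bar>d\<bar>" by (intro mult_left_mono) auto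
    ultimately have "b * b * (k + 1) \<le> 0" unfolding k_def by (simp add: algebra_simps)
    hence "b * b \<le> 0" using kpos by (simp add: mult_le_0_iff)
    hence "b * b = 0" by (metis antisym zero_le_square)
    thus ?thesis unfolding b_def[symmetric] by simp
  qed
  define u where "u = A *v w - c *\<^sub>R w"
  have uW: "u \<in> W"
  proof -
    have "v j \<bullet> (A *v w) = 0" if "j \<in> F" for j
    proof -
      have "v j \<bullet> (A *v w) = (A *v v j) \<bullet> w" by (rule sym_inner[OF sym])
      also have "\<dots> = \<mu> j * (v j \<bullet> w)" using ev that by simp
      also have "\<dots> = 0" using wW that by (simp add: W_def)
      finally show ?thesis .
    qed
    thus ?thesis using wW unfolding u_def W_def by (simp add: inner_diff_right)
  qed
  have "u \<bullet> w = (A *v w) \<bullet> w - c * (w \<bullet> w)" by (simp add: u_def inner_diff_left)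
  also have "(A *v w) \<bullet> w = c" unfolding c_def q_def by (rule inner_commute)
  finally have uw: "u \<bullet> w = 0" using ww by simp
  have "u \<bullet> u = u \<bullet> (A *v w) - c * (u \<bullet> w)" by (simp add: u_def inner_diff_right)
  also have "\<dots> = 0" using key[OF uW uw] uw by simp
  finally have "u = 0" by simp
  hence "A *v w = c *\<^sub>R w" by (simp add: u_def)
  thus ?thesis using w1 wW unfolding W_def by blast
qed

lemma eig_family:
  fixes A :: "real^'p^'p" and I :: "'p set"
  assumes sym: "transpose A = A"
  shows "\<exists>v \<mu>. (\<forall>i\<in>I. norm (v i) = 1 \<and> A *v v i = \<mu> i *\<^sub>R v i) \<and>
     (\<forall>i\<in>I. \<forall>j\<in>I. i \<noteq> j \<longrightarrow> v i \<bullet> v j = 0)"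
proof -
  have "finite I" by simp
  thus ?thesis
  proof (induction I rule: finite_induct)
    case empty thus ?case by blast
  next
    case (insert i F)
    obtain v \<mu> where h: "(\<forall>i\<in>F. norm (v i) = 1 \<and> A *v v i = \<mu> i *\<^sub>R v i) \<and>
      (\<forall>i\<in>F. \<forall>j\<in>F. i \<noteq> j \<longrightarrow> v i \<bullet> v j = 0)" using insert.IH by (elim exE)
    have h1: "\<forall>i\<in>F. norm (v i) = 1 \<and> A *v v i = \<mu> i *\<^sub>R v i" using h by (rule conjunct1)
    have h2: "\<forall>i\<in>F. \<forall>j\<in>F. i \<noteq> j \<longrightarrow> v i \<bullet> v j = 0" using h by (rule conjunct2)
    have ev: "\<forall>j\<in>F. A *v v j = \<mu> j *\<^sub>R v j" using h1 by simp
    obtain w c where w: "norm w = 1" "A *v w = c *\<^sub>R w" "\<forall>j\<in>F. v j \<bullet> w = 0"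
      using eig_step[OF sym insert(2) ev] by (elim exE conjE)
    define v' where "v' = v(i := w)"
    define \<mu>' where "\<mu>' = \<mu>(i := c)"
    have A1: "norm (v' k) = 1 \<and> A *v v' k = \<mu>' k *\<^sub>R v' k" if "k \<in> insert i F" for k
    proof (cases "k = i")
      case True thus ?thesis using w by (simp add: v'_def \<mu>'_def)
    next
      case False thus ?thesis using h1 that by (simp add: v'_def \<mu>'_def)
    qed
    have A2: "v' k \<bullet> v' j = 0" if "k \<in> insert i F" "j \<in> insert i F" "k \<noteq> j" for k j
    proof (cases "k = i")
      case True
      hence "j \<in> F" "j \<noteq> i" using that by auto
      thus ?thesis using True w(3) by (simp add: v'_def inner_commute)
    next
      case False
      hence kF: "k \<in> F" using that by auto
      show ?thesis
      proof (cases "j = i")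
        case True thus ?thesis using False kF w(3) by (simp add: v'_def)
      next
        case False2: False
        hence "j \<in> F" using that by auto
        thus ?thesis using False False2 kF h2 that(3) by (simp add: v'_def)
      qed
    qed
    have "\<forall>k\<in>insert i F. norm (v' k) = 1 \<and> A *v v' k = \<mu>' k *\<^sub>R v' k" using A1 by blast
    moreover have "\<forall>k\<in>insert i F. \<forall>j\<in>insert i F. k \<noteq> j \<longrightarrow> v' k \<bullet> v' j = 0" using A2 by blast
    ultimately show ?case by (intro exI[of _ v'] exI[of _ \<mu>'] conjI)
  qed
qed

definition diagm :: "('p \<Rightarrow> real) \<Rightarrow> real^'p^'p" where
  "diagm d = (\<chi> i j. if i = j then d i else 0)"

lemma mm_diagm_right: "((B::real^'p^'n) ** diagm d) $ i $ j = B$i$j * d j"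
proof -
  have "((B::real^'p^'n) ** diagm d) $ i $ j = (\<Sum>k\<in>UNIV. B$i$k * (if k = j then d k else 0))"
    unfolding matrix_matrix_mult_def diagm_def by simp
  also have "\<dots> = (\<Sum>k\<in>UNIV. if k = j then B$i$j * d j else 0)"
    by (rule sum.cong) auto
  finally show ?thesis by simp
qed

lemma mm_diagm_left: "(diagm d ** (B::real^'n^'p)) $ i $ j = d i * B$i$j"
proof -
  have "(diagm d ** B) $ i $ j = (\<Sum>k\<in>UNIV. (if i = k then d i else 0) * B$k$j)"
    unfolding matrix_matrix_mult_def diagm_def by simp
  also have "\<dots> = (\<Sum>k\<in>UNIV. if k = i then d i * B$i$j else 0)"
    by (rule sum.cong) auto
  finally show ?thesis by simp
qed

lemma spectral:
  fixes A :: "real^'p^'p"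
  assumes sym: "transpose A = A"
  shows "\<exists>(V::real^'p^'p) \<mu>. transpose V ** V = mat 1 \<and> V ** transpose V = mat 1 \<and> A ** V = V ** diagm \<mu>"
proof -
  obtain v :: "'p \<Rightarrow> real^'p" and \<mu> where h: "(\<forall>i\<in>UNIV. norm (v i) = 1 \<and> A *v v i = \<mu> i *\<^sub>R v i) \<and>
     (\<forall>i\<in>UNIV. \<forall>j\<in>UNIV. i \<noteq> j \<longrightarrow> v i \<bullet> v j = 0)"
    using eig_family[OF sym, of UNIV] by (elim exE)
  have h1: "\<forall>i. norm (v i) = 1 \<and> A *v v i = \<mu> i *\<^sub>R v i" using h by simp
  have h2: "\<forall>i j. i \<noteq> j \<longrightarrow> v i \<bullet> v j = 0" using h by simp
  define V where "V = (\<chi> r j. v j $ r)"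
  have VV: "transpose V ** V = mat 1"
  proof -
    have "(transpose V ** V) $ i $ j = mat 1 $ i $ j" for i j
    proof -
      have "(transpose V ** V) $ i $ j = v i \<bullet> v j"
        by (simp add: V_def matrix_matrix_mult_def transpose_def inner_vec_def)
      thus ?thesis using h1 h2 by (cases "i = j") (auto simp: mat_def norm_eq_1)
    qed
    thus ?thesis by (simp add: vec_eq_iff)
  qed
  moreover have "V ** transpose V = mat 1" using VV by (simp add: matrix_left_right_inverse)
  moreover have "A ** V = V ** diagm \<mu>"
  proof -
    have "(A ** V) $ r $ j = (V ** diagm \<mu>) $ r $ j" for r j
    proof -
      have "(A ** V) $ r $ j = (A *v v j) $ r"
        by (simp add: V_def matrix_matrix_mult_def matrix_vector_mult_def)
      also have "\<dots> = \<mu> j * v j $ r" using h1 by simp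
      finally show ?thesis by (simp add: mm_diagm_right V_def)
    qed
    thus ?thesis by (simp add: vec_eq_iff)
  qed
  ultimately show ?thesis by (intro exI[of _ V] exI[of _ \<mu>] conjI)
qed

lemma orth_sq: "transpose (V::real^'p^'p) ** V = mat 1 \<Longrightarrow> V ** transpose V = mat 1"
  by (simp add: matrix_left_right_inverse)

lemma norm_orth_left:
  assumes "transpose Q ** Q = mat 1"
  shows "norm ((Q::real^'p^'n) ** (B::real^'m^'p)) = norm B"
proof -
  have "(Q ** B) \<bullet> (Q ** B) = (transpose Q ** (Q ** B)) \<bullet> B" by (rule inner_mul_left)
  also have "\<dots> = B \<bullet> B" by (simp add: matrix_mul_assoc assms)
  finally show ?thesis by (simp add: norm_eq_sqrt_inner)
qed

lemma norm_orth_right: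
  assumes "R ** transpose R = mat 1"
  shows "norm ((B::real^'p^'n) ** (R::real^'m^'p)) = norm B"
proof -
  have "(B ** R) \<bullet> (B ** R) = ((B ** R) ** transpose R) \<bullet> B" by (rule inner_mul_right)
  also have "\<dots> = B \<bullet> B" by (simp add: matrix_mul_assoc[symmetric] assms)
  finally show ?thesis by (simp add: norm_eq_sqrt_inner)
qed

lemma entry_le_norm: "\<bar>(A::real^'m^'n)$i$j\<bar> \<le> norm A"
proof -
  have "norm (A$i) \<le> norm A" by (rule Finite_Cartesian_Product.norm_nth_le)
  thus ?thesis using component_le_norm_cart[of "A$i" j] by linarith
qed

lemma diagm_mult: "diagm a ** diagm b = diagm (\<lambda>i. a i * b i)"
  by (simp add: vec_eq_iff mm_diagm_right) (simp add: diagm_def)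

lemma diagm_one: "diagm (\<lambda>_. 1) = mat 1"
  by (simp add: diagm_def mat_def vec_eq_iff)

lemma transpose_diagm: "transpose (diagm a) = diagm a"
  by (simp add: diagm_def transpose_def vec_eq_iff)

lemma diagm_diff: "diagm a - diagm b = diagm (\<lambda>i. a i - b i)"
  by (simp add: diagm_def vec_eq_iff)

lemma norm_diagm_sq: "(norm (diagm a))^2 = (\<Sum>i\<in>UNIV. (a i)^2)"
proof -
  have "(norm (diagm a))^2 = (\<Sum>i\<in>UNIV. \<Sum>j\<in>UNIV. (diagm a)$i$j * (diagm a)$i$j)"
    by (simp only: power2_norm_eq_inner inner_mat)
  also have "\<dots> = (\<Sum>i\<in>UNIV. (a i)^2)"
  proof (rule sum.cong[OF refl])
    fix i
    have "(\<Sum>j\<in>UNIV. (diagm a)$i$j * (diagm a)$i$j) = (\<Sum>j\<in>UNIV. if j = i then a i * a i else 0)"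
      by (rule sum.cong) (auto simp: diagm_def)
    thus "(\<Sum>j\<in>UNIV. (diagm a)$i$j * (diagm a)$i$j) = (a i)^2" by (simp add: power2_eq_square)
  qed
  finally show ?thesis .
qed

lemma norm_diagm_mono:
  assumes "\<And>i. \<bar>a i\<bar> \<le> \<bar>b i\<bar>"
  shows "norm (diagm a) \<le> norm (diagm b)"
proof -
  have "(norm (diagm a))^2 \<le> (norm (diagm b))^2"
    unfolding norm_diagm_sq
    by (rule sum_mono) (metis assms abs_le_square_iff)
  thus ?thesis by (rule power2_le_imp_le) simp
qed

lemma offdiag_diagm:
  assumes "\<forall>i j. i \<noteq> j \<longrightarrow> (S::real^'p^'p) $ i $ j = 0"
  shows "S = diagm (\<lambda>i. S$i$i)"
  using assms by (auto simp: vec_eq_iff diagm_def)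

lemma psd_diag:
  assumes "\<And>i. d i \<ge> 0" and "transpose V' ** V' = mat 1"
  shows "B \<bullet> ((V' ** diagm d ** transpose V') ** B) \<ge> 0"
proof -
  define C where "C = transpose V' ** B"
  have "B \<bullet> ((V' ** diagm d ** transpose V') ** B) = B \<bullet> (V' ** (diagm d ** C))"
    by (simp add: C_def matrix_mul_assoc)
  also have "\<dots> = C \<bullet> (diagm d ** C)" by (simp add: inner_mul_left C_def)
  also have "\<dots> = (\<Sum>i\<in>UNIV. \<Sum>j\<in>UNIV. d i * (C$i$j)^2)"
    by (simp add: inner_mat mm_diagm_left power2_eq_square mult_ac)
  also have "\<dots> \<ge> 0" using assms(1) by (intro sum_nonneg) simp
  finally show ?thesis .
qed

lemma sqrt_unique:
  fixes V V' :: "real^'p^'p"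
  assumes V: "transpose V ** V = mat 1" and V': "transpose V' ** V' = mat 1"
    and spos: "\<And>j. s j > 0" and d': "\<And>j. d' j \<ge> 0"
    and P'sq: "P' ** P' = V ** diagm (\<lambda>j. (s j)^2) ** transpose V"
    and P': "P' = V' ** diagm d' ** transpose V'"
  shows "P' = V ** diagm s ** transpose V"
proof -
  have VVt: "V ** transpose V = mat 1" using orth_sq[OF V] .
  define W where "W = P' ** V - V ** diagm s"
  have "P' ** W = - (W ** diagm s)"
  proof -
    have "P' ** W = P' ** P' ** V - P' ** V ** diagm s" by (simp add: W_def mm_simps)
    also have "P' ** P' ** V = V ** diagm (\<lambda>j. (s j)^2)"
      using P'sq by (simp add: matrix_mul_assoc[symmetric] V)
    also have "V ** diagm (\<lambda>j. (s j)^2) = V ** diagm s ** diagm s"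
      by (simp add: matrix_mul_assoc[symmetric] diagm_mult power2_eq_square)
    finally show ?thesis by (simp add: W_def mm_simps)
  qed
  hence "W \<bullet> (P' ** W) = - (W \<bullet> (W ** diagm s))" by simp
  moreover have "W \<bullet> (P' ** W) \<ge> 0" unfolding P' by (rule psd_diag[OF d' V'])
  moreover have ws: "W \<bullet> (W ** diagm s) = (\<Sum>i\<in>UNIV. \<Sum>j\<in>UNIV. s j * (W$i$j)^2)"
    by (simp add: inner_mat mm_diagm_right power2_eq_square mult_ac)
  moreover have "(\<Sum>i\<in>UNIV. \<Sum>j\<in>UNIV. s j * (W$i$j)^2) \<ge> 0"
    using spos by (intro sum_nonneg) (simp add: less_imp_le)
  ultimately have "(\<Sum>i\<in>UNIV. \<Sum>j\<in>UNIV. s j * (W$i$j)^2) = 0" by linarith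
  hence "\<forall>i. (\<Sum>j\<in>UNIV. s j * (W$i$j)^2) = 0"
    using spos by (subst (asm) sum_nonneg_eq_0_iff) (auto intro!: sum_nonneg simp: less_imp_le)
  hence "\<forall>i j. s j * (W$i$j)^2 = 0"
    using spos by (subst (asm) sum_nonneg_eq_0_iff) (auto simp: less_imp_le)
  hence "W = 0" using spos by (auto simp: vec_eq_iff) (metis less_irrefl power_eq_0_iff)
  hence "P' ** V = V ** diagm s" by (simp add: W_def)
  hence "P' ** V ** transpose V = V ** diagm s ** transpose V" by simp
  thus ?thesis by (simp add: matrix_mul_assoc[symmetric] VVt)
qed

lemma cancel_r: "(B::real^'m^'n) ** (C::real^'n^'m) = mat 1 \<Longrightarrow> (A::real^'n^'k) ** B ** C = A"
  by (simp add: matrix_mul_assoc[symmetric])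

lemma polar_facts:
  fixes X :: "real^'p^'n"
  assumes hE: "norm (transpose X ** X - mat 1) \<le> 1/6"
  shows "\<exists>P::real^'p^'p. transpose (polar_proj X) ** polar_proj X = mat 1 \<and> X = polar_proj X ** P \<and>
     transpose P = P \<and> norm (P - mat 1) \<le> norm (transpose X ** X - mat 1)"
proof -
  define M where "M = transpose X ** X"
  define E where "E = M - mat 1"
  have Msym: "transpose M = M" by (simp add: M_def mm_simps)
  obtain V :: "real^'p^'p" and \<mu> where V: "transpose V ** V = mat 1" and Vt: "V ** transpose V = mat 1"
    and MV: "M ** V = V ** diagm \<mu>"
    using spectral[OF Msym] by blast
  have D: "transpose V ** M ** V = diagm \<mu>"
    by (simp add: matrix_mul_assoc[symmetric] MV) (simp add: matrix_mul_assoc V)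
  have VEV: "transpose V ** E ** V = diagm (\<lambda>j. \<mu> j - 1)"
  proof -
    have "transpose V ** E ** V = transpose V ** M ** V - transpose V ** V"
      by (simp add: E_def mm_simps)
    thus ?thesis by (simp add: D V diagm_one[symmetric] diagm_diff)
  qed
  have nVEV: "norm (transpose V ** E ** V) = norm E"
  proof -
    have "norm ((transpose V ** E) ** V) = norm (transpose V ** E)" by (rule norm_orth_right[OF Vt])
    also have "\<dots> = norm E" by (rule norm_orth_left) (simp add: Vt)
    finally show ?thesis .
  qed
  have mu_b: "\<bar>\<mu> j - 1\<bar> \<le> 1/6" for j
  proof -
    have "\<bar>\<mu> j - 1\<bar> = \<bar>(transpose V ** E ** V) $ j $ j\<bar>" by (simp add: VEV diagm_def)
    also have "\<dots> \<le> norm E" unfolding nVEV[symmetric] by (rule entry_le_norm)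
    finally show ?thesis using hE by (simp add: E_def M_def)
  qed
  define s where "s = (\<lambda>j. sqrt (\<mu> j))"
  have mupos: "\<mu> j > 0" for j using mu_b[of j] by linarith
  have spos: "s j > 0" for j using mupos by (simp add: s_def)
  have ssq: "s j * s j = \<mu> j" for j using mupos by (simp add: s_def less_imp_le)
  define S where "S = diagm s"
  define Si where "Si = diagm (\<lambda>j. 1 / s j)"
  have f1: "(\<lambda>j. 1 / s j * s j) = (\<lambda>_. 1)" "(\<lambda>j. s j * (1 / s j)) = (\<lambda>_. 1)"
    using spos by (auto intro!: ext simp: less_irrefl) (metis less_irrefl nonzero_divide_eq_eq)+
  have SiS: "Si ** S = mat 1"
    by (simp only: S_def Si_def diagm_mult f1 diagm_one)
  have SSi: "S ** Si = mat 1"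
    by (simp only: S_def Si_def diagm_mult f1 diagm_one)
  define U where "U = X ** V ** Si"
  have UU: "transpose U ** U = mat 1"
  proof -
    have "transpose U ** U = Si ** (transpose V ** M ** V) ** Si"
      by (simp add: U_def M_def mm_simps Si_def transpose_diagm)
    also have "\<dots> = diagm (\<lambda>j. (1 / s j) * \<mu> j * (1 / s j))"
      by (simp add: D Si_def diagm_mult)
    also have "\<dots> = mat 1"
    proof -
      have "(\<lambda>j. (1 / s j) * \<mu> j * (1 / s j)) = (\<lambda>_. 1)"
        using spos ssq mupos by (auto simp: field_simps intro!: ext) (metis less_irrefl)
      thus ?thesis by (simp add: diagm_one)
    qed
    finally show ?thesis .
  qed
  have XU: "X = U ** S ** transpose V"
  proof -
    have "U ** S ** transpose V = X ** V ** (Si ** S) ** transpose V"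
      by (simp add: U_def matrix_mul_assoc)
    also have "\<dots> = X" by (simp add: SiS matrix_mul_assoc[symmetric] Vt)
    finally show ?thesis by simp
  qed
  have svd: "econ_svd X U S V"
    unfolding econ_svd_def using UU V XU spos
    by (auto simp: S_def diagm_def less_imp_le)
  define Q0 where "Q0 = U ** transpose V"
  define P0 where "P0 = V ** S ** transpose V"
  have XQP: "X = Q0 ** P0"
    unfolding Q0_def P0_def using XU by (simp add: matrix_mul_assoc cancel_r[OF V])
  define Pi where "Pi = V ** Si ** transpose V"
  have PPi: "P0 ** Pi = mat 1"
  proof -
    have "P0 ** Pi = V ** S ** (transpose V ** V) ** Si ** transpose V"
      by (simp add: P0_def Pi_def matrix_mul_assoc)
    also have "\<dots> = V ** (S ** Si) ** transpose V" by (simp add: V matrix_mul_assoc)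
    also have "\<dots> = mat 1" by (simp add: SSi Vt)
    finally show ?thesis .
  qed
  have Mdiag: "M = V ** diagm (\<lambda>j. (s j)^2) ** transpose V"
  proof -
    have "M = M ** V ** transpose V" by (simp add: cancel_r[OF Vt])
    also have "\<dots> = V ** diagm \<mu> ** transpose V" by (simp add: MV)
    also have "diagm \<mu> = diagm (\<lambda>j. (s j)^2)" using ssq by (simp add: power2_eq_square)
    finally show ?thesis .
  qed
  have uniq: "U' ** transpose V' = Q0" if sv: "econ_svd X U' S' V'" for U' S' V'
  proof -
    have U'U': "transpose U' ** U' = mat 1" and V'V': "transpose V' ** V' = mat 1"
      and off: "\<forall>i j. i \<noteq> j \<longrightarrow> S' $ i $ j = 0" and nn: "\<forall>i. S' $ i $ i \<ge> 0"
      and X': "X = U' ** S' ** transpose V'"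
      using sv unfolding econ_svd_def by blast+
    have V'Vt: "V' ** transpose V' = mat 1" using orth_sq[OF V'V'] .
    define d' where "d' = (\<lambda>i. S' $ i $ i)"
    have S'd: "S' = diagm d'" unfolding d'_def by (rule offdiag_diagm[OF off])
    define Q' where "Q' = U' ** transpose V'"
    define P' where "P' = V' ** diagm d' ** transpose V'"
    have XQP': "X = Q' ** P'"
      unfolding Q'_def P'_def using X' S'd by (simp add: matrix_mul_assoc cancel_r[OF V'V'])
    have Q'Q': "transpose Q' ** Q' = mat 1"
    proof -
      have "transpose Q' ** Q' = V' ** (transpose U' ** U') ** transpose V'"
        by (simp add: Q'_def mm_simps)
      thus ?thesis by (simp add: U'U' V'Vt)
    qed
    have P'sym: "transpose P' = P'" by (simp add: P'_def mm_simps transpose_diagm)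
    have "M = transpose P' ** (transpose Q' ** Q') ** P'"
      unfolding M_def by (subst (1 2) XQP') (simp add: mm_simps)
    hence "P' ** P' = M" by (simp add: Q'Q' P'sym)
    hence "P' = V ** diagm s ** transpose V"
      using sqrt_unique[OF V V'V' spos, of d' P'] nn Mdiag by (simp add: d'_def P'_def)
    hence P'P0: "P' = P0" by (simp add: P0_def S_def)
    have "Q' = Q' ** (P0 ** Pi)" by (simp add: PPi)
    also have "\<dots> = X ** Pi" using XQP' P'P0 by (simp add: matrix_mul_assoc)
    also have "\<dots> = Q0 ** (P0 ** Pi)" using XQP by (simp add: matrix_mul_assoc)
    also have "\<dots> = Q0" by (simp add: PPi)
    finally show ?thesis by (simp add: Q'_def)
  qed
  have pp: "polar_proj X = Q0"
    unfolding polar_proj_def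
  proof (rule the_equality)
    show "\<exists>U S V. econ_svd X U S V \<and> Q0 = U ** transpose V" using svd Q0_def by blast
  next
    fix Q assume "\<exists>U S V. econ_svd X U S V \<and> Q = U ** transpose V"
    thus "Q = Q0" using uniq by blast
  qed
  have QQ: "transpose Q0 ** Q0 = mat 1"
  proof -
    have "transpose Q0 ** Q0 = V ** (transpose U ** U) ** transpose V"
      by (simp add: Q0_def mm_simps)
    thus ?thesis by (simp add: UU Vt)
  qed
  have P0sym: "transpose P0 = P0" by (simp add: P0_def S_def mm_simps transpose_diagm)
  have "norm (P0 - mat 1) \<le> norm E"
  proof -
    have "P0 - mat 1 = V ** diagm (\<lambda>j. s j - 1) ** transpose V"
    proof -
      have "V ** diagm (\<lambda>j. s j - 1) ** transpose V = V ** (S - mat 1) ** transpose V"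
        by (simp add: S_def diagm_one[symmetric] diagm_diff)
      also have "\<dots> = P0 - V ** transpose V" by (simp add: P0_def mm_simps)
      finally show ?thesis by (simp add: Vt)
    qed
    hence "norm (P0 - mat 1) = norm (diagm (\<lambda>j. s j - 1))"
    proof -
      have VV2: "transpose V ** transpose (transpose V) = mat 1" using V by simp
      show ?thesis using \<open>P0 - mat 1 = _\<close> norm_orth_right[OF VV2, of "V ** diagm (\<lambda>j. s j - 1)"] norm_orth_left[OF V, of "diagm (\<lambda>j. s j - 1)"]
        by simp
    qed
    also have "\<dots> \<le> norm (diagm (\<lambda>j. \<mu> j - 1))"
    proof (rule norm_diagm_mono)
      fix j
      have "\<mu> j - 1 = (s j - 1) * (s j + 1)" using ssq[of j] by (simp add: algebra_simps)
      hence "\<bar>\<mu> j - 1\<bar> = \<bar>s j - 1\<bar> * (s j + 1)" using spos[of j] by (simp add: abs_mult)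
      moreover have "\<bar>s j - 1\<bar> * 1 \<le> \<bar>s j - 1\<bar> * (s j + 1)" using spos[of j] by (intro mult_left_mono) auto
      ultimately show "\<bar>s j - 1\<bar> \<le> \<bar>\<mu> j - 1\<bar>" by simp
    qed
    also have "\<dots> = norm E" using nVEV VEV by simp
    finally show ?thesis .
  qed
  thus ?thesis using pp QQ XQP P0sym unfolding E_def M_def by blast
qed

lemma inner_Av: "((A::real^'p^'n) *v v) \<bullet> (A *v v) = v \<bullet> ((transpose A ** A) *v v)"
proof -
  have "((A *v v) v* A) \<bullet> v = (A *v v) \<bullet> (A *v v)" by (rule dot_lmul_matrix)
  moreover have "(transpose A ** A) *v v = (A *v v) v* A"
    by (simp add: matrix_vector_mul_assoc[symmetric])
  ultimately show ?thesis by (simp add: inner_commute)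
qed

lemma orth_R:
  fixes Y :: "real^'p^'n"
  assumes YY: "transpose Y ** Y = mat 1" and Es: "transpose E = E"
  shows "rgrad f Y \<bullet> (Y ** E) = 0"
proof -
  define G where "G = egrad f Y"
  define B where "B = transpose Y ** G"
  have "transpose Y ** rgrad f Y = B - symPart B"
    by (simp add: rgrad_def G_def B_def mm_simps YY)
  also have "\<dots> = (1/2) *\<^sub>R (B - transpose B)"
    unfolding symPart_def by (simp add: vec_eq_iff algebra_simps)
  finally have TR: "transpose Y ** rgrad f Y = (1/2) *\<^sub>R (B - transpose B)" .
  have BE: "transpose B \<bullet> E = B \<bullet> E"
  proof -
    have "transpose B \<bullet> E = transpose B \<bullet> transpose E" by (simp add: Es)
    also have "\<dots> = B \<bullet> E" by (simp add: inner_transpose)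
    finally show ?thesis .
  qed
  have "rgrad f Y \<bullet> (Y ** E) = (transpose Y ** rgrad f Y) \<bullet> E" by (rule inner_mul_left)
  also have "\<dots> = 0" unfolding TR using BE by (simp add: inner_diff_left)
  finally show ?thesis .
qed

lemma final_arith:
  fixes a b err g :: real
  assumes a: "a \<ge> 0" and b: "b \<ge> 0" and g: "g \<ge> sqrt (a^2 + b^2) - err" and err: "err \<le> b / 3"
  shows "g \<ge> a / 2 + b / 4"
proof -
  have ab: "2 * (a * b) \<le> a^2 + b^2" using sum_squares_bound[of a b] by (simp add: mult.assoc)
  have "(a/2 + 7*b/12)^2 = a^2/4 + 7*(a*b)/12 + 49*b^2/144"
    by (simp add: power2_eq_square algebra_simps)
  moreover have "a^2 \<ge> 0" "b^2 \<ge> 0" by simp_all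
  ultimately have "(a/2 + 7*b/12)^2 \<le> a^2 + b^2" using ab by linarith
  hence "a/2 + 7*b/12 \<le> sqrt (a^2 + b^2)" by (rule real_le_rsqrt)
  thus ?thesis using g err by linarith
qed


theorem mainTheorem17:
  fixes f :: "real^'p^'n \<Rightarrow> real" and \<beta> :: real and X :: "real^'p^'n"
  assumes "CARD('p) \<le> CARD('n)"
    and "\<forall>Y. f differentiable (at Y)"
    and "loc_lipschitz f" and "loc_lipschitz (egrad f)"
    and "\<beta> \<ge> beta_bar f"
    and "X \<in> OmegaBar (1/6)"
  shows "norm (egrad (hfun f \<beta>) X) \<ge>
           1/2 * norm (rgrad f (polar_proj X)) + \<beta>/4 * norm (transpose X ** X - mat 1)"
proof -
  note diff = assms(2) and ll = assms(4)
  define E where "E = transpose X ** X - mat 1"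
  define e where "e = norm E"
  have hE: "e \<le> 1/6" using assms(6) by (simp add: OmegaBar_def e_def E_def)
  obtain P :: "real^'p^'p" where YY: "transpose (polar_proj X) ** polar_proj X = mat 1"
    and XYP: "X = polar_proj X ** P" and Ps: "transpose P = P" and Pn: "norm (P - mat 1) \<le> e"
    using polar_facts[of X] hE unfolding e_def E_def by blast
  define Y where "Y = polar_proj X"
  have YY': "transpose Y ** Y = mat 1" using YY by (simp add: Y_def)
  have XYP': "X = Y ** P" using XYP by (simp add: Y_def)
  have EP: "E = P ** P - mat 1"
  proof -
    have "transpose X ** X = transpose P ** (transpose Y ** Y) ** P"
      by (subst (1 2) XYP') (simp add: mm_simps)
    thus ?thesis by (simp add: E_def YY' Ps)
  qed
  have Esym: "transpose E = E" by (simp add: E_def mm_simps)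
  have XmY: "X - Y = Y ** (P - mat 1)" using XYP' by (simp add: mm_simps)
  have dXY: "norm (X - Y) \<le> e"
    using XmY norm_orth_left[OF YY', of "P - mat 1"] Pn by simp
  have nYE: "norm (Y ** E) = e" unfolding e_def by (rule norm_orth_left[OF YY'])
  have e0: "e \<ge> 0" by (simp add: e_def)
  have YO: "Y \<in> OmegaSet"
  proof -
    have "norm (Y *v v) \<le> 13/12 * norm v" for v
    proof -
      have "(Y *v v) \<bullet> (Y *v v) = v \<bullet> v" by (simp add: inner_Av YY')
      hence "norm (Y *v v) = norm v" by (simp add: norm_eq_sqrt_inner)
      thus ?thesis by simp
    qed
    thus ?thesis by (simp add: Omega_iff)
  qed
  have XO: "X \<in> OmegaSet"
  proof -
    have "norm (X *v v) \<le> 13/12 * norm v" for v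
    proof -
      have "(X *v v) \<bullet> (X *v v) = v \<bullet> ((E + mat 1) *v v)" by (simp add: inner_Av E_def)
      also have "\<dots> = v \<bullet> (E *v v) + v \<bullet> v" by (simp add: matrix_vector_mult_add_rdistrib inner_add_right)
      also have "\<dots> \<le> norm v * (e * norm v) + norm v * norm v"
      proof -
        have "v \<bullet> (E *v v) \<le> norm v * norm (E *v v)" by (rule norm_cauchy_schwarz)
        also have "\<dots> \<le> norm v * (e * norm v)" unfolding e_def by (intro mult_left_mono norm_mv_le) simp
        finally show ?thesis by (simp add: dot_square_norm power2_eq_square)
      qed
      also have "\<dots> \<le> (13/12 * norm v)^2"
      proof -
        have a1: "norm v * (e * norm v) \<le> norm v * (1/6 * norm v)" using hE by (intro mult_left_mono mult_right_mono) auto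
        have a2: "norm v * (1/6 * norm v) = 1/6 * (norm v * norm v)" by simp
        have a3: "(13/12 * norm v)^2 = 169/144 * (norm v * norm v)" by (simp add: power2_eq_square)
        have a4: "norm v * norm v \<ge> 0" by simp
        show ?thesis using a1 a2 a3 a4 by linarith
      qed
      finally have "(norm (X *v v))^2 \<le> (13/12 * norm v)^2" by (simp add: power2_norm_eq_inner)
      thus ?thesis by (rule power2_le_imp_le) simp
    qed
    thus ?thesis by (simp add: Omega_iff)
  qed
  have gh: "egrad (hfun f \<beta>) X = gradg f X + \<beta> *\<^sub>R (X ** E)"
    unfolding E_def by (rule egrad_hfun[OF diff])
  define R where "R = rgrad f (polar_proj X)"
  have RY: "R = gradg f Y" unfolding R_def Y_def[symmetric] by (rule gradg_stiefel[OF YY', symmetric])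
  have orth: "R \<bullet> (Y ** E) = 0" unfolding R_def Y_def[symmetric] by (rule orth_R[OF YY' Esym])
  show ?thesis
  proof (cases "X = Y")
    case True
    hence "P = mat 1"
    proof -
      have "transpose Y ** X = P" using XYP' by (simp add: matrix_mul_assoc YY')
      thus ?thesis using True YY' by simp
    qed
    hence "E = 0" using EP by simp
    hence "egrad (hfun f \<beta>) X = R" using gh RY True by simp
    moreover have "e = 0" using \<open>E = 0\<close> by (simp add: e_def)
    ultimately show ?thesis unfolding R_def e_def E_def[symmetric] by simp
  next
    case False
    have n1: "norm (gradg f X - gradg f Y) \<le> M2 f * norm (X - Y)"
      by (rule M2_bound[OF diff ll XO YO False])
    have dpos: "norm (X - Y) > 0" using False by simp
    have M2nn: "M2 f \<ge> 0"
    proof (rule ccontr)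
      assume "\<not> M2 f \<ge> 0"
      hence "M2 f * norm (X - Y) < 0" using dpos by (simp add: mult_neg_pos)
      thus False using n1 norm_ge_zero[of "gradg f X - gradg f Y"] by linarith
    qed
    have b6: "6 * M2 f \<le> \<beta>" using assms(5) by (simp add: beta_bar_def)
    have bnn: "\<beta> \<ge> 0" using b6 M2nn by linarith
    define err where "err = (gradg f X - gradg f Y) + \<beta> *\<^sub>R ((X - Y) ** E)"
    have ghs: "egrad (hfun f \<beta>) X = (R + \<beta> *\<^sub>R (Y ** E)) + err"
      unfolding gh err_def RY by (simp add: mm_simps algebra_simps)
    have errb: "norm err \<le> \<beta> * e / 3"
    proof -
      have "norm err \<le> norm (gradg f X - gradg f Y) + norm (\<beta> *\<^sub>R ((X - Y) ** E))"
        unfolding err_def by (rule norm_triangle_ineq)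
      also have "norm (gradg f X - gradg f Y) \<le> \<beta> * e / 6"
      proof -
        have "M2 f * norm (X - Y) \<le> M2 f * e" using dXY M2nn by (rule mult_left_mono)
        also have "\<dots> \<le> (\<beta>/6) * e" using b6 e0 by (intro mult_right_mono) auto
        finally show ?thesis using n1 by simp
      qed
      also have "norm (\<beta> *\<^sub>R ((X - Y) ** E)) \<le> \<beta> * e / 6"
      proof -
        have "norm ((X - Y) ** E) \<le> norm (X - Y) * e" unfolding e_def by (rule norm_mm_le)
        also have "\<dots> \<le> e * (1/6)" using dXY hE e0 by (intro mult_mono) auto
        finally have "norm ((X - Y) ** E) \<le> e / 6" by simp
        hence "\<beta> * norm ((X - Y) ** E) \<le> \<beta> * (e / 6)" using bnn by (rule mult_left_mono)
        thus ?thesis using bnn by simp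
      qed
      finally show ?thesis by simp
    qed
    have main: "norm (R + \<beta> *\<^sub>R (Y ** E)) = sqrt ((norm R)^2 + (\<beta> * e)^2)"
    proof -
      have "(R + \<beta> *\<^sub>R (Y ** E)) \<bullet> (R + \<beta> *\<^sub>R (Y ** E)) = R \<bullet> R + \<beta>^2 * ((Y ** E) \<bullet> (Y ** E))"
        using orth by (simp add: inner_add_left inner_add_right inner_commute power2_eq_square)
      also have "\<dots> = (norm R)^2 + (\<beta> * e)^2"
        using nYE by (simp add: power2_norm_eq_inner[symmetric] power_mult_distrib)
      finally show ?thesis by (simp add: norm_eq_sqrt_inner)
    qed
    have "norm (egrad (hfun f \<beta>) X) \<ge> sqrt ((norm R)^2 + (\<beta> * e)^2) - norm err"
    proof -
      have "norm (R + \<beta> *\<^sub>R (Y ** E)) \<le> norm (R + \<beta> *\<^sub>R (Y ** E) + err) + norm (- err)"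
        using norm_triangle_ineq[of "R + \<beta> *\<^sub>R (Y ** E) + err" "- err"] by simp
      thus ?thesis unfolding ghs main[symmetric] by simp
    qed
    hence "norm (egrad (hfun f \<beta>) X) \<ge> norm R / 2 + \<beta> * e / 4"
      by (rule final_arith[OF norm_ge_zero mult_nonneg_nonneg[OF bnn e0]]) (use errb in simp)
    thus ?thesis unfolding R_def e_def E_def by simp
  qed
qed

end
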